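(* Let $n\ge1$, $0<\lambda<1$, $p>1$, let $w$ be a non-negative locally integrable function on $\mathbb{R}^n$ and $f$ measurable. For every cube $Q\in\mathcal{Q}$ with center $c_Q$ and every $N\in\mathbb{N}$, $$\frac{1}{|Q|^{\lambda}}\int_Q|f|^pw\le C\sup_{R\in\mathcal{F}_N}\frac{1}{|R|^{\lambda}}\int_R|f|^pw,$$ where $$\mathcal{F}_N=\Big\{R\in\mathcal{Q}: R\subset Q,\ \frac{N}{\sqrt n}\,\mathrm{diam}\,R\le \mathrm{dist}(R,c_Q)\le N\,\mathrm{diam}\,R\Big\}$$ and the constant $C$ depends only on $\lambda$, $N$ and $n$.
   Context: $\mathcal{Q}$ denotes the family of all cubes in $\mathbb{R}^n$ with sides parallel to the axes; $\mathrm{dist}(R,c_Q)$ is the distance from the point $c_Q$ to the set $R$. *)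

theory Defs
  imports "HOL-Analysis.Analysis"
begin

definition cube :: "'a::euclidean_space \<Rightarrow> real \<Rightarrow> 'a set" where
  "cube c r = cbox (c - r *\<^sub>R One) (c + r *\<^sub>R One)"

definition is_cube :: "'a::euclidean_space set \<Rightarrow> bool" where
  "is_cube R \<longleftrightarrow> (\<exists>c r. r > 0 \<and> R = cube c r)"

definition locally_integrable :: "('a::euclidean_space \<Rightarrow> real) \<Rightarrow> bool" where
  "locally_integrable w \<longleftrightarrow> (\<forall>K. compact K \<longrightarrow> set_integrable lebesgue K w)"

definition F_fam :: "nat \<Rightarrow> 'a::euclidean_space set \<Rightarrow> 'a \<Rightarrow> 'a set set" where
  "F_fam N Q c = {R. is_cube R \<and> R \<subseteq> Q \<and>
      real N / sqrt (real DIM('a)) * diameter R \<le> infdist c R \<and>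
      infdist c R \<le> real N * diameter R}"

definition morrey_avg :: "real \<Rightarrow> real \<Rightarrow> ('a::euclidean_space \<Rightarrow> real) \<Rightarrow> ('a \<Rightarrow> real) \<Rightarrow> 'a set \<Rightarrow> ennreal" where
  "morrey_avg lam p f w R =
     ennreal (1 / (measure lebesgue R powr lam)) *
     (\<integral>\<^sup>+ x \<in> R. ennreal (\<bar>f x\<bar> powr p * w x) \<partial>lebesgue)"

end

theory Submission
  imports Defs
begin

lemma sum_Basis_inner:
  fixes b :: "'a::euclidean_space"
  assumes "b \<in> Basis"
  shows "(\<Sum>i\<in>Basis. g i *\<^sub>R i) \<bullet> b = g b"
  using assms by (simp add: inner_sum_left inner_Basis if_distrib cong: if_cong)

lemma mem_cube: "x \<in> cube e h \<longleftrightarrow> (\<forall>b\<in>(Basis::'a::euclidean_space set). \<bar>(x - e) \<bullet> b\<bar> \<le> h)"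
  by (auto simp: cube_def mem_box inner_diff_left inner_add_left abs_le_iff algebra_simps)

lemma measure_cube:
  assumes "h > 0"
  shows "measure lebesgue (cube (e::'a::euclidean_space) h) = (2*h)^DIM('a)"
  using assms by (simp add: cube_def measure_lborel_cbox_eq inner_diff_left inner_add_left algebra_simps)

lemma norm_One': "norm (One::'a::euclidean_space) = sqrt DIM('a)"
proof -
  have "(One::'a) \<bullet> One = (\<Sum>b\<in>(Basis::'a set). (One \<bullet> b) * (One \<bullet> b))" by (rule euclidean_inner)
  also have "\<dots> = (\<Sum>b\<in>(Basis::'a set). 1)" by (intro sum.cong) (auto simp: inner_sum_left inner_Basis sum.delta)
  finally show ?thesis by (simp add: norm_eq_sqrt_inner)
qed

lemma diameter_cube:
  assumes "h > 0"
  shows "diameter (cube (e::'a::euclidean_space) h) = 2*h * sqrt DIM('a)"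
proof -
  have "diameter (cube e h) = dist (e - h *\<^sub>R One) (e + h *\<^sub>R One)"
    unfolding cube_def using assms by (intro diameter_cbox) (auto simp: inner_diff_left inner_add_left)
  also have "\<dots> = dist (e + h *\<^sub>R One) (e - h *\<^sub>R One)" by (rule dist_commute)
  also have "\<dots> = norm ((2*h) *\<^sub>R (One::'a))" unfolding dist_norm
    by (rule arg_cong[where f=norm]) (simp add: pth_8)
  also have "\<dots> = 2*h * sqrt DIM('a)" using assms by (simp add: norm_One')
  finally show ?thesis .
qed

definition cen :: "'a::euclidean_space \<Rightarrow> real \<Rightarrow> ('a \<Rightarrow> int) \<Rightarrow> 'a" where
  "cen c s j = c + (\<Sum>b\<in>Basis. (s * (of_int (j b) + 1/2)) *\<^sub>R b)"

lemma cen_inner: "b \<in> Basis \<Longrightarrow> (cen c s j - c) \<bullet> b = s * (of_int (j b) + 1/2)"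
  unfolding cen_def by (simp add: sum_Basis_inner)

lemma le_infdist_I:
  assumes "A \<noteq> {}" "\<And>y. y \<in> A \<Longrightarrow> d \<le> dist x y"
  shows "d \<le> infdist x A"
  unfolding infdist_def using assms by (auto intro!: cINF_greatest)

lemma cell_in_F:
  fixes c :: "'a::euclidean_space"
  assumes s: "s > 0" and N: "N \<ge> 1"
    and jb: "\<And>b. b \<in> Basis \<Longrightarrow> -(int N+1) \<le> j b \<and> j b \<le> int N"
    and b0: "b0 \<in> Basis" "j b0 = int N \<or> j b0 = -(int N+1)"
    and sr: "(real N + 1) * s \<le> r"
  shows "cube (cen c s j) (s/2) \<in> F_fam N (cube c r) c"
proof -
  let ?R = "cube (cen c s j) (s/2)"
  have coord: "s * of_int (j b) \<le> (y - c) \<bullet> b \<and> (y - c) \<bullet> b \<le> s * (of_int (j b) + 1)"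
    if "y \<in> ?R" "b \<in> Basis" for y b
  proof -
    have "\<bar>(y - cen c s j) \<bullet> b\<bar> \<le> s/2" using that by (simp add: mem_cube)
    then have u: "-(s/2) \<le> (y - cen c s j) \<bullet> b" "(y - cen c s j) \<bullet> b \<le> s/2" by linarith+
    have e: "(y - c) \<bullet> b = (y - cen c s j) \<bullet> b + s * (of_int (j b) + 1/2)"
      using cen_inner[OF that(2), of c s j] by (simp add: inner_diff_left)
    have q: "s * (of_int (j b) + 1/2) = s * of_int (j b) + s/2" "s * (of_int (j b) + 1) = s * of_int (j b) + s"
      by (simp_all add: algebra_simps)
    show ?thesis using u e q by (intro conjI) linarith+
  qed
  have cube: "is_cube ?R" unfolding is_cube_def using s by (intro exI[of _ "cen c s j"] exI[of _ "s/2"]) auto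
  have sub: "?R \<subseteq> cube c r"
  proof
    fix y assume y: "y \<in> ?R"
    show "y \<in> cube c r" unfolding mem_cube
    proof
      fix b :: 'a assume b: "b \<in> Basis"
      have c1: "s * of_int (j b) \<le> (y - c) \<bullet> b" "(y - c) \<bullet> b \<le> s * (of_int (j b) + 1)" using coord[OF y b] by auto
      have j1: "- (real N + 1) \<le> of_int (j b)" "of_int (j b) \<le> real N" using jb[OF b] by linarith+
      have "s * (- (real N + 1)) \<le> s * of_int (j b)" using j1 s by (intro mult_left_mono) auto
      moreover have "s * (of_int (j b) + 1) \<le> s * (real N + 1)" using j1 s by (intro mult_left_mono) auto
      ultimately show "\<bar>(y - c) \<bullet> b\<bar> \<le> r" using c1 sr by (auto simp: abs_le_iff algebra_simps)
    qed
  qed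
  have diam: "diameter ?R = s * sqrt DIM('a)" using diameter_cube[of "s/2" "cen c s j"] s by simp
  have "cen c s j \<in> ?R" using s by (simp add: mem_cube)
  then have ne: "?R \<noteq> {}" by blast
  have low: "real N * s \<le> infdist c ?R"
  proof (rule le_infdist_I[OF ne])
    fix y assume y: "y \<in> ?R"
    have cy: "s * of_int (j b0) \<le> (y - c) \<bullet> b0" "(y - c) \<bullet> b0 \<le> s * (of_int (j b0) + 1)"
      using coord[OF y b0(1)] by auto
    have "real N * s \<le> \<bar>(y - c) \<bullet> b0\<bar>"
      using b0(2)
    proof
      assume "j b0 = int N"
      then have "of_int (j b0) = real N" by simp
      then show ?thesis using cy s by (simp add: mult.commute)
    next
      assume "j b0 = -(int N + 1)"
      then have "of_int (j b0) + 1 = - real N" by simp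
      then have "(y - c) \<bullet> b0 \<le> - (s * real N)" using cy by simp
      then show ?thesis by (simp add: mult.commute)
    qed
    also have "\<dots> \<le> norm (y - c)" using b0(1) by (rule Basis_le_norm)
    finally show "real N * s \<le> dist c y" by (simp add: dist_norm norm_minus_commute)
  qed
  define t where "t b = s * (if j b \<ge> 0 then of_int (j b) else of_int (j b) + 1)" for b
  define y where "y = c + (\<Sum>b\<in>Basis. t b *\<^sub>R b)"
  have yc: "(y - c) \<bullet> b = t b" if "b \<in> Basis" for b
    unfolding y_def using that by (simp add: sum_Basis_inner)
  have yR: "y \<in> ?R" unfolding mem_cube
  proof
    fix b :: 'a assume b: "b \<in> Basis"
    have "(y - cen c s j) \<bullet> b = t b - s * (of_int (j b) + 1/2)"
      using yc[OF b] cen_inner[OF b, of c s j] by (simp add: inner_diff_left)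
    moreover have "t b - s * (of_int (j b) + 1/2) = (if j b \<ge> 0 then -(s/2) else s/2)"
      by (simp add: t_def algebra_simps)
    ultimately show "\<bar>(y - cen c s j) \<bullet> b\<bar> \<le> s/2" using s by simp
  qed
  have tb: "\<bar>t b\<bar> \<le> real N * s" if "b \<in> Basis" for b
  proof -
    have j1: "- (int N + 1) \<le> j b" "j b \<le> int N" using jb[OF that] by auto
    show ?thesis
    proof (cases "j b \<ge> 0")
      case True
      then have "\<bar>t b\<bar> = s * of_int (j b)" using s by (simp add: t_def)
      also have "\<dots> \<le> s * real N" using j1 s by (intro mult_left_mono) linarith+
      finally show ?thesis by (simp add: mult.commute)
    next
      case False
      then have "\<bar>t b\<bar> = s * (- (of_int (j b) + 1))" using s by (simp add: t_def abs_mult)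
      also have "\<dots> \<le> s * real N" using j1 s by (intro mult_left_mono) linarith+
      finally show ?thesis by (simp add: mult.commute)
    qed
  qed
  have "infnorm (y - c) \<le> real N * s"
    unfolding infnorm_Max using tb yc by (auto intro!: Max.boundedI)
  then have "norm (y - c) \<le> sqrt DIM('a) * (real N * s)"
    using norm_le_infnorm[of "y - c"] by (meson mult_left_mono order_trans real_sqrt_ge_zero of_nat_0_le_iff)
  then have up: "infdist c ?R \<le> sqrt DIM('a) * (real N * s)"
    using infdist_le[OF yR, of c] by (simp add: dist_norm norm_minus_commute)
  have sq: "sqrt (real DIM('a)) > 0" by simp
  show ?thesis unfolding F_fam_def
    using cube sub low up sq by (auto simp: diam field_simps)
qed

lemma find_cell:
  fixes c x :: "'a::euclidean_space"
  assumes s: "s > 0"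
    and lo: "real N * s < infnorm (x - c)" and hi: "infnorm (x - c) \<le> (real N + 1) * s"
  shows "\<exists>j. (\<forall>b\<in>Basis. -(int N+1) \<le> j b \<and> j b \<le> int N) \<and>
             (\<exists>b0\<in>Basis. j b0 = int N \<or> j b0 = -(int N+1)) \<and> x \<in> cube (cen c s j) (s/2)"
proof -
  define y where "y b = (x - c) \<bullet> b / s" for b
  define j where "j b = min (int N) (floor (y b))" for b
  have xy: "(x - c) \<bullet> b = s * y b" for b using s by (simp add: y_def)
  have ybd: "\<bar>y b\<bar> \<le> real N + 1" if "b \<in> Basis" for b
  proof -
    have "\<bar>s * y b\<bar> \<le> (real N + 1) * s" using Basis_le_infnorm[OF that, of "x - c"] hi xy[of b] by simp
    then have "s * \<bar>y b\<bar> \<le> s * (real N + 1)" using s by (simp add: abs_mult mult.commute)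
    then show ?thesis using s by simp
  qed
  have jr: "-(int N+1) \<le> j b \<and> j b \<le> int N" if "b \<in> Basis" for b
  proof -
    have "- (real N + 1) \<le> y b" using ybd[OF that] by linarith
    then have "-(int N+1) \<le> floor (y b)" by (simp add: le_floor_iff)
    then show ?thesis by (simp add: j_def)
  qed
  have jy: "of_int (j b) \<le> y b \<and> y b \<le> of_int (j b) + 1" if "b \<in> Basis" for b
  proof (cases "floor (y b) \<le> int N")
    case True
    then have "j b = floor (y b)" by (simp add: j_def)
    then show ?thesis by linarith
  next
    case False
    then have jb: "j b = int N" by (simp add: j_def)
    have "real N + 1 \<le> y b" using False by linarith
    then show ?thesis using ybd[OF that] jb by simp
  qed
  have xin: "x \<in> cube (cen c s j) (s/2)" unfolding mem_cube
  proof
    fix b :: 'a assume b: "b \<in> Basis"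
    have "(x - cen c s j) \<bullet> b = s * (y b - of_int (j b) - 1/2)"
      using xy[of b] cen_inner[OF b, of c s j] by (simp add: inner_diff_left algebra_simps)
    moreover have "\<bar>y b - of_int (j b) - 1/2\<bar> \<le> 1/2" using jy[OF b] by linarith
    ultimately show "\<bar>(x - cen c s j) \<bullet> b\<bar> \<le> s/2" using s
      by (simp add: abs_mult)
  qed
  have "infnorm (x - c) \<in> (\<lambda>i. \<bar>(x - c) \<bullet> i\<bar>) ` Basis"
    unfolding infnorm_Max by (rule Max_in) auto
  then obtain b0 where b0: "b0 \<in> Basis" "infnorm (x - c) = \<bar>(x - c) \<bullet> b0\<bar>" by auto
  have "real N * s < s * \<bar>y b0\<bar>" using lo b0(2) xy[of b0] s by (simp add: abs_mult)
  then have ylo: "real N < \<bar>y b0\<bar>" using s by (simp add: mult.commute)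
  have "j b0 = int N \<or> j b0 = -(int N+1)"
  proof (cases "y b0 \<ge> 0")
    case True
    then have "real N < y b0" using ylo by simp
    then have "int N \<le> floor (y b0)" by (simp add: le_floor_iff)
    then show ?thesis by (simp add: j_def)
  next
    case False
    then have "y b0 < - real N" using ylo by simp
    then have "floor (y b0) < - int N" by (simp add: floor_less_iff)
    then have "j b0 < - int N" unfolding j_def by linarith
    then show ?thesis using jr[OF b0(1)] by linarith
  qed
  then show ?thesis using jr b0(1) xin by blast
qed

lemma find_k:
  fixes r d :: real and N :: nat
  assumes N: "N \<ge> 1" and r: "r > 0" and d: "0 < d" "d \<le> r"
  shows "\<exists>k. real N * (r / (real N + 1) * (real N / (real N + 1)) ^ k) < d \<and>
              d \<le> (real N + 1) * (r / (real N + 1) * (real N / (real N + 1)) ^ k)"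
proof -
  define q where "q = real N / (real N + 1)"
  define P where "P k \<longleftrightarrow> real N * (r / (real N + 1) * q ^ k) < d" for k
  have q1: "q < 1" "0 < q" using N by (auto simp: q_def)
  obtain k where k: "q ^ k < d / (real N * (r / (real N + 1)))"
    using real_arch_pow_inv[OF _ q1(1)] d r N by (metis divide_pos_pos mult_pos_pos of_nat_0_less_iff not_one_le_zero not_gr_zero add_pos_pos zero_less_one of_nat_0_le_iff le_add_same_cancel2 less_add_same_cancel2)
  have pos: "real N * (r / (real N + 1)) > 0" using N r by auto
  have "q ^ k * (real N * (r / (real N + 1))) < d" using k pos
    by (simp add: pos_less_divide_eq pos_divide_less_eq[of "real N + 1"])
  then have "P k" unfolding P_def by (simp add: algebra_simps)
  define k0 where "k0 = (LEAST k. P k)"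
  have Pk0: "P k0" unfolding k0_def by (rule LeastI[of P k, OF \<open>P k\<close>])
  have "d \<le> (real N + 1) * (r / (real N + 1) * q ^ k0)"
  proof (cases k0)
    case 0
    then show ?thesis using d by simp
  next
    case (Suc m)
    then have "\<not> P m" unfolding k0_def using not_less_Least by (metis lessI)
    then have "d \<le> real N * (r / (real N + 1) * q ^ m)" by (simp add: P_def)
    also have "\<dots> = r * q ^ m * (real N / (real N + 1))"
      by (simp add: field_simps)
    also have "\<dots> = r * q ^ m * q" by (simp add: q_def)
    also have "\<dots> = (real N + 1) * (r / (real N + 1) * q ^ k0)"
      using Suc by (simp add: field_simps)
    finally show ?thesis .
  qed
  then show ?thesis using Pk0 unfolding P_def q_def by blast
qed

lemma ennreal_le_suminf: "(f::nat \<Rightarrow> ennreal) n \<le> (\<Sum>i. f i)"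
  using ennreal_suminf_lessD linorder_not_less by blast

lemma powr_power_base: "0 < (x::real) \<Longrightarrow> (x ^ k) powr e = (x powr e) ^ k"
  by (induction k) (auto simp: powr_mult)

theorem lemma3p2:
  fixes lam :: real and N :: nat
  assumes "0 < lam" "lam < 1"
  shows "\<exists>C::real. C > 0 \<and>
    (\<forall>(p::real) (w::'a::euclidean_space \<Rightarrow> real) (f::'a \<Rightarrow> real) (c::'a) (r::real).
       p > 1 \<longrightarrow> (\<forall>x. 0 \<le> w x) \<longrightarrow> locally_integrable w \<longrightarrow>
       f \<in> borel_measurable lebesgue \<longrightarrow> r > 0 \<longrightarrow>
       morrey_avg lam p f w (cube c r)
         \<le> ennreal C * (SUP R \<in> F_fam N (cube c r) c. morrey_avg lam p f w R))"
proof (cases "N = 0")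
  case True
  show ?thesis
  proof (intro exI[of _ 1] conjI allI impI)
    show "(0::real) < 1" by simp
    fix p :: real and w :: "'a \<Rightarrow> real" and f :: "'a \<Rightarrow> real" and c :: 'a and r :: real
    assume r: "r > 0"
    have cc: "c \<in> cube c r" using r by (simp add: mem_cube)
    have "cube c r \<in> F_fam N (cube c r) c"
      unfolding F_fam_def is_cube_def using True r cc by auto
    then show "morrey_avg lam p f w (cube c r)
         \<le> ennreal 1 * (SUP R \<in> F_fam N (cube c r) c. morrey_avg lam p f w R)"
      by (simp add: SUP_upper)
  qed
next
  case False
  then have N: "N \<ge> 1" by simp
  define n where "n = DIM('a)"
  have n: "n > 0" unfolding n_def by simp
  define q where "q = real N / (real N + 1)"
  have q: "0 < q" "q < 1" using N by (auto simp: q_def)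
  define t where "t = (q powr lam) ^ n"
  have qpl: "0 < q powr lam" "q powr lam < 1"
    using q assms powr_less_mono2[of lam q 1] by auto
  have t: "0 < t" "t < 1" unfolding t_def using qpl n by (auto simp: power_less_one_iff)
  define A where "A = PiE (Basis::'a set) (\<lambda>_. {-(int N+1)..int N})"
  have finA: "finite A" unfolding A_def by (simp add: finite_PiE)
  have "card A = (\<Prod>b\<in>(Basis::'a set). card {-(int N+1)..int N})"
    unfolding A_def by (simp add: card_PiE)
  then have cardA: "card A > 0" by simp
  define K where "K = real (card A)"
  have K: "K > 0" using cardA by (simp add: K_def)
  define C where "C = K * ((1 / (2 * (real N + 1))) powr lam) ^ n / (1 - t)"
  have C: "C > 0" unfolding C_def using K t by auto
  show ?thesis
  proof (intro exI[of _ C] conjI allI impI)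
    show "C > 0" by (rule C)
    fix p :: real and w :: "'a \<Rightarrow> real" and f :: "'a \<Rightarrow> real" and c :: 'a and r :: real
    assume p: "p > 1" and w: "\<forall>x. 0 \<le> w x" and wi: "locally_integrable w"
      and fm: "f \<in> borel_measurable lebesgue" and r: "r > 0"
    define sk where "sk k = r / (real N + 1) * q ^ k" for k
    have sk: "sk k > 0" for k unfolding sk_def using r q by simp
    define cell where "cell k j = cube (cen c (sk k) j) (sk k / 2)" for k j
    define Q where "Q = cube c r"
    define F where "F = F_fam N Q c"
    define M where "M = (SUP R\<in>F. morrey_avg lam p f w R)"
    define g where "g x = \<bar>f x\<bar> powr p * w x" for x
    have g0: "g x \<ge> 0" for x unfolding g_def using w by simp
    define h where "h k j x = (if cell k j \<in> F then ennreal (g x * indicator (cell k j) x) else 0)" for k j x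
    have hmeas: "h k j \<in> borel_measurable lebesgue" for k j
    proof (cases "cell k j \<in> F")
      case True
      have "compact (cell k j)" unfolding cell_def cube_def by simp
      then have "set_integrable lebesgue (cell k j) w" using wi unfolding locally_integrable_def by blast
      then have wm: "(\<lambda>x. indicator (cell k j) x *\<^sub>R w x) \<in> borel_measurable lebesgue"
        unfolding set_integrable_def by (rule borel_measurable_integrable)
      have eq: "h k j = (\<lambda>x. ennreal (\<bar>f x\<bar> powr p * (indicator (cell k j) x *\<^sub>R w x)))"
        using True by (auto simp: h_def g_def fun_eq_iff mult_ac)
      show ?thesis unfolding eq using wm fm by measurable
    next
      case False
      then have "h k j = (\<lambda>_. 0)" by (simp add: h_def fun_eq_iff)
      then show ?thesis by simp
    qed
    have ptw: "ennreal (g x * indicator Q x) \<le> (\<Sum>k. \<Sum>j\<in>A. h k j x)" if xc: "x \<noteq> c" for x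
    proof (cases "x \<in> Q")
      case False
      then show ?thesis by simp
    next
      case True
      define d where "d = infnorm (x - c)"
      have d0: "0 < d" unfolding d_def using xc by (simp add: infnorm_pos_lt)
      have "d \<le> r" unfolding d_def infnorm_Max using True by (auto simp: Q_def mem_cube intro!: Max.boundedI)
      then obtain k where k: "real N * sk k < d" "d \<le> (real N + 1) * sk k"
        using find_k[OF N r d0] unfolding sk_def q_def by blast
      obtain j0 where j0: "\<forall>b\<in>Basis. -(int N+1) \<le> j0 b \<and> j0 b \<le> int N"
          "\<exists>b0\<in>Basis. j0 b0 = int N \<or> j0 b0 = -(int N+1)" "x \<in> cube (cen c (sk k) j0) (sk k / 2)"
        using find_cell[OF sk k[unfolded d_def]] by blast
      define j where "j = restrict j0 Basis"
      have jA: "j \<in> A" unfolding j_def A_def using j0(1) by auto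
      have cenj: "cen c (sk k) j = cen c (sk k) j0" unfolding cen_def j_def by (auto intro!: sum.cong)
      have "q ^ k \<le> 1" using q by (simp add: power_le_one)
      then have "(real N + 1) * sk k \<le> r" unfolding sk_def using r
        by (simp add: mult_left_le)
      then have inF: "cell k j \<in> F" unfolding cell_def F_def Q_def cenj
        using j0(2) cell_in_F[OF sk N, where j=j0 and r=r and c=c] j0(1) by blast
      have "ennreal (g x * indicator Q x) = h k j x"
        using inF j0(3) True by (simp add: h_def cell_def cenj)
      also have "\<dots> \<le> (\<Sum>j\<in>A. h k j x)"
        by (rule member_le_sum[OF jA _ finA]) simp
      also have "\<dots> \<le> (\<Sum>k. \<Sum>j\<in>A. h k j x)" by (rule ennreal_le_suminf)
      finally show ?thesis .
    qed
    have AEc: "AE x in lebesgue. x \<noteq> c" by (simp add: AE_completion AE_lborel_singleton)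
    have int_le: "(\<integral>\<^sup>+ x\<in>Q. ennreal (g x) \<partial>lebesgue) \<le> (\<Sum>k. \<Sum>j\<in>A. integral\<^sup>N lebesgue (h k j))"
    proof -
      have "(\<integral>\<^sup>+ x\<in>Q. ennreal (g x) \<partial>lebesgue) = (\<integral>\<^sup>+ x. ennreal (g x * indicator Q x) \<partial>lebesgue)"
        by (rule nn_integral_set_ennreal)
      also have "\<dots> \<le> (\<integral>\<^sup>+ x. (\<Sum>k. \<Sum>j\<in>A. h k j x) \<partial>lebesgue)"
        by (rule nn_integral_mono_AE) (use AEc ptw in auto)
      also have "\<dots> = (\<Sum>k. integral\<^sup>N lebesgue (\<lambda>x. \<Sum>j\<in>A. h k j x))"
        by (rule nn_integral_suminf) (use hmeas in measurable)
      also have "\<dots> = (\<Sum>k. \<Sum>j\<in>A. integral\<^sup>N lebesgue (h k j))"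
        by (intro suminf_cong nn_integral_sum) (use hmeas in auto)
      finally show ?thesis .
    qed
    have mcell: "measure lebesgue (cell k j) = sk k ^ n" for k j
      unfolding cell_def n_def using measure_cube[of "sk k / 2" "cen c (sk k) j"] sk[of k] by simp
    have hle: "integral\<^sup>N lebesgue (h k j) \<le> ennreal ((sk k ^ n) powr lam) * M" for k j
    proof (cases "cell k j \<in> F")
      case True
      let ?m = "(sk k ^ n) powr lam"
      have m0: "?m > 0" using sk[of k] by simp
      have "integral\<^sup>N lebesgue (h k j) = (\<integral>\<^sup>+ x\<in>cell k j. ennreal (g x) \<partial>lebesgue)"
      proof -
        have "h k j = (\<lambda>x. ennreal (g x * indicator (cell k j) x))" using True by (simp add: h_def fun_eq_iff)
        then show ?thesis by (simp add: nn_integral_set_ennreal)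
      qed
      also have "\<dots> = ennreal ?m * morrey_avg lam p f w (cell k j)"
        unfolding morrey_avg_def mcell g_def
        using m0 sk[of k] by (simp add: mult.assoc[symmetric] ennreal_mult''[symmetric])
      also have "\<dots> \<le> ennreal ?m * M"
        unfolding M_def using True by (intro mult_left_mono SUP_upper) auto
      finally show ?thesis .
    next
      case False
      then have "h k j = (\<lambda>_. 0)" by (simp add: h_def fun_eq_iff)
      then show ?thesis by simp
    qed
    define a where "a k = K * (((r / (real N + 1)) powr lam) ^ n * t ^ k)" for k
    have ak: "K * (sk k ^ n) powr lam = a k" for k
    proof -
      have "(sk k ^ n) powr lam = (sk k powr lam) ^ n" using sk[of k] by (rule powr_power_base)
      also have "sk k powr lam = (r / (real N + 1)) powr lam * (q powr lam) ^ k"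
      proof -
        have "sk k powr lam = (r / (real N + 1)) powr lam * (q ^ k) powr lam"
          unfolding sk_def using r q by (intro powr_mult)
        then show ?thesis using q by (simp add: powr_power_base)
      qed
      finally show ?thesis unfolding a_def t_def by (simp add: power_mult_distrib power_mult[symmetric] mult.commute[of n])
    qed
    have suma: "a sums (K * ((r / (real N + 1)) powr lam) ^ n / (1 - t))"
    proof -
      have "(\<lambda>k. t ^ k) sums (1 / (1 - t))" using t by (intro geometric_sums) simp
      then have "(\<lambda>k. K * ((r / (real N + 1)) powr lam) ^ n * t ^ k) sums (K * ((r / (real N + 1)) powr lam) ^ n * (1 / (1 - t)))"
        by (rule sums_mult)
      then show ?thesis unfolding a_def by (simp add: mult.assoc)
    qed
    have a0: "a k \<ge> 0" for k unfolding a_def using K t by simp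
    have step: "(\<Sum>k. \<Sum>j\<in>A. integral\<^sup>N lebesgue (h k j)) \<le> ennreal (K * ((r / (real N + 1)) powr lam) ^ n / (1 - t)) * M"
    proof -
      have "(\<Sum>j\<in>A. integral\<^sup>N lebesgue (h k j)) \<le> ennreal (a k) * M" for k
      proof -
        have "(\<Sum>j\<in>A. integral\<^sup>N lebesgue (h k j)) \<le> (\<Sum>j\<in>A. ennreal ((sk k ^ n) powr lam) * M)"
          by (rule sum_mono) (rule hle)
        also have "\<dots> = of_nat (card A) * (ennreal ((sk k ^ n) powr lam) * M)" by simp
        also have "\<dots> = ennreal (a k) * M"
          unfolding ak[symmetric] K_def
          by (simp add: ennreal_mult'' ennreal_of_nat_eq_real_of_nat mult.assoc)
        finally show ?thesis .
      qed
      then have "(\<Sum>k. \<Sum>j\<in>A. integral\<^sup>N lebesgue (h k j)) \<le> (\<Sum>k. ennreal (a k) * M)"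
        by (intro suminf_le) auto
      also have "\<dots> = (\<Sum>k. ennreal (a k)) * M" by simp
      also have "(\<Sum>k. ennreal (a k)) = ennreal (\<Sum>k. a k)"
        using a0 suma by (intro suminf_ennreal2) (auto simp: sums_iff)
      also have "(\<Sum>k. a k) = K * ((r / (real N + 1)) powr lam) ^ n / (1 - t)"
        using suma by (simp add: sums_iff)
      finally show ?thesis .
    qed
    have mQ: "measure lebesgue Q powr lam = ((2 * r) powr lam) ^ n"
    proof -
      have "measure lebesgue Q = (2 * r) ^ n" unfolding Q_def n_def by (rule measure_cube[OF r])
      moreover have "((2 * r) ^ n) powr lam = ((2 * r) powr lam) ^ n" using r by (intro powr_power_base) simp
      ultimately show ?thesis by simp
    qed
    have Ceq: "1 / (measure lebesgue Q powr lam) * (K * ((r / (real N + 1)) powr lam) ^ n / (1 - t)) = C"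
    proof -
      have "(r / (real N + 1)) powr lam / (2 * r) powr lam = (1 / (2 * (real N + 1))) powr lam"
        using r by (simp add: powr_divide[symmetric] mult.commute)
      then have "((r / (real N + 1)) powr lam) ^ n / ((2 * r) powr lam) ^ n = ((1 / (2 * (real N + 1))) powr lam) ^ n"
        by (simp add: power_divide[symmetric])
      then show ?thesis unfolding mQ C_def by (simp add: field_simps)
    qed
    have "morrey_avg lam p f w (cube c r) = ennreal (1 / (measure lebesgue Q powr lam)) * (\<integral>\<^sup>+ x\<in>Q. ennreal (g x) \<partial>lebesgue)"
      unfolding morrey_avg_def Q_def g_def ..
    also have "\<dots> \<le> ennreal (1 / (measure lebesgue Q powr lam)) * (ennreal (K * ((r / (real N + 1)) powr lam) ^ n / (1 - t)) * M)"
      using int_le step by (intro mult_left_mono) auto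
    also have "\<dots> = ennreal (1 / (measure lebesgue Q powr lam) * (K * ((r / (real N + 1)) powr lam) ^ n / (1 - t))) * M"
    proof -
      have "0 \<le> 1 / (measure lebesgue Q powr lam)" by simp
      moreover have "0 \<le> K * ((r / (real N + 1)) powr lam) ^ n / (1 - t)" using K t by simp
      ultimately show ?thesis by (metis ennreal_mult mult.assoc)
    qed
    also have "\<dots> = ennreal C * M" by (simp only: Ceq)
    finally show "morrey_avg lam p f w (cube c r)
         \<le> ennreal C * (SUP R \<in> F_fam N (cube c r) c. morrey_avg lam p f w R)"
      unfolding M_def F_def Q_def .
  qed
qed

end
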